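(* For $\beta,c,\beta',c'\in\mathbb{C}$, the formal deformations $(\langle\cdot,\cdot\rangle^{\beta,c}_n)_{n\ge0}$ and $(\langle\cdot,\cdot\rangle^{\beta',c'}_n)_{n\ge0}$ of $\mathcal K$ are modular-isomorphic if and only if $c=c'$ and either $\beta=\beta'=0$ or both $\beta\ne0$ and $\beta'\ne0$.
   Context: Let $\mathcal K=\mathbb{C}[E_4,E_6,A,A^{-1},B]$ be the localization at $A$ of the polynomial algebra $\mathbb{C}[E_4,E_6,A,B]$ in algebraically independent variables, bigraded by weight and index with $E_4$: $(4,0)$, $E_6$: $(6,0)$, $A$: $(-2,1)$, $B$: $(0,1)$; $\mathcal K_{k,p}$ are the homogeneous components. Set $F_2=BA^{-1}$. Let $\pi$ be the derivation with $\pi(f)=kF_2f$ for $f\in\mathcal K_{k,p}$, $S^\flat$ the derivation with $S^\flat(E_4)=-\frac13E_6$, $S^\flat(E_6)=-\frac12E_4^2$, $S^\flat(F_2)=0$, $S^\flat(A)=0$, and $\delta_\beta=S^\flat+\beta\pi$. For $f\in\mathcal K_{k,p}$, $g\in\mathcal K_{\ell,q}$: $\langle f,g\rangle^{\beta,c}_n=\sum_{i=0}^n(-1)^i\binom{k+cp+n-1}{n-i}\binom{\ell+cq+n-1}{i}\delta_\beta^i(f)\delta_\beta^{n-i}(g)$, extended bilinearly; these are formal deformations of $\mathcal K$. Two formal deformations $(\mu_n)_n$, $(\nu_n)_n$ of $\mathcal K$ are modular-isomorphic if there is a $\mathbb{C}$-linear bijection $\phi:\mathcal K\to\mathcal K$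 mapping each $\mathcal K_{k,p}$ into $\mathcal K_{k,p}$ with $\phi(\mu_n(f,g))=\nu_n(\phi(f),\phi(g))$ for all $n\ge0$, $f,g\in\mathcal K$. *)

theory Defs
  imports Complex_Main "HOL-Library.Poly_Mapping" "HOL-Library.Product_Plus"
begin

text \<open>The algebra K = C[E4,E6,A,A^-1,B] is modelled as finitely supported functions
from exponent vectors (a,b,c,d) (for E4^a E6^b A^c B^d, with c an integer) to complex
coefficients; multiplication is convolution (Poly_Mapping).\<close>

type_synonym mon = "nat \<times> nat \<times> int \<times> nat"
type_synonym K = "mon \<Rightarrow>\<^sub>0 complex"

definition cK :: "complex \<Rightarrow> K" where "cK z = Poly_Mapping.single 0 z"

definition X :: "mon \<Rightarrow> K" where "X m = Poly_Mapping.single m 1"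

fun wt :: "mon \<Rightarrow> int" where "wt (a,b,c,d) = 4 * int a + 6 * int b - 2 * c"
fun idx :: "mon \<Rightarrow> int" where "idx (a,b,c,d) = c + int d"

definition Kcomp :: "int \<Rightarrow> int \<Rightarrow> K set" where
  "Kcomp k p = {f. \<forall>m\<in>Poly_Mapping.keys f. wt m = k \<and> idx m = p}"

text \<open>F2 = B A^-1\<close>
definition F2 :: K where "F2 = X (0, 0, -1, 1)"

definition linext :: "(mon \<Rightarrow> K) \<Rightarrow> K \<Rightarrow> K" where
  "linext D f = (\<Sum>m\<in>Poly_Mapping.keys f. cK (Poly_Mapping.lookup f m) * D m)"

definition pi_mon :: "mon \<Rightarrow> K" where
  "pi_mon m = cK (of_int (wt m)) * F2 * X m"

text \<open>S-flat on monomials (derivation with S(E4) = -E6/3, S(E6) = -E4^2/2, S(A) = 0, S(F2) = 0,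
hence S(B) = 0).\<close>
fun S_mon :: "mon \<Rightarrow> K" where
  "S_mon (a,b,c,d) =
     cK (of_nat a * (-1/3)) * X (a - 1, b + 1, c, d)
   + cK (of_nat b * (-1/2)) * X (a + 2, b - 1, c, d)"

definition delta :: "complex \<Rightarrow> K \<Rightarrow> K" where
  "delta \<beta> = linext (\<lambda>m. S_mon m + cK \<beta> * pi_mon m)"

text \<open>The bracket on a pair of monomials (which are homogeneous).\<close>
definition bracket_mon :: "complex \<Rightarrow> complex \<Rightarrow> nat \<Rightarrow> mon \<Rightarrow> mon \<Rightarrow> K" where
  "bracket_mon \<beta> c n m1 m2 =
     (\<Sum>i\<le>n. cK ((-1) ^ i
        * ((of_int (wt m1) + c * of_int (idx m1) + of_nat n - 1) gchoose (n - i))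
        * ((of_int (wt m2) + c * of_int (idx m2) + of_nat n - 1) gchoose i))
      * (delta \<beta> ^^ i) (X m1) * (delta \<beta> ^^ (n - i)) (X m2))"

definition bracket :: "complex \<Rightarrow> complex \<Rightarrow> nat \<Rightarrow> K \<Rightarrow> K \<Rightarrow> K" where
  "bracket \<beta> c n f g =
     (\<Sum>m1\<in>Poly_Mapping.keys f. \<Sum>m2\<in>Poly_Mapping.keys g. cK (Poly_Mapping.lookup f m1 * Poly_Mapping.lookup g m2) * bracket_mon \<beta> c n m1 m2)"

definition modular_isomorphic :: "(nat \<Rightarrow> K \<Rightarrow> K \<Rightarrow> K) \<Rightarrow> (nat \<Rightarrow> K \<Rightarrow> K \<Rightarrow> K) \<Rightarrow> bool" where
  "modular_isomorphic \<mu> \<nu> \<longleftrightarrow>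
     (\<exists>\<phi> :: K \<Rightarrow> K.
        bij \<phi>
      \<and> (\<forall>f g. \<phi> (f + g) = \<phi> f + \<phi> g)
      \<and> (\<forall>z f. \<phi> (cK z * f) = cK z * \<phi> f)
      \<and> (\<forall>k p. \<forall>f\<in>Kcomp k p. \<phi> f \<in> Kcomp k p)
      \<and> (\<forall>n f g. \<phi> (\<mu> n f g) = \<nu> n (\<phi> f) (\<phi> g)))"

end

theory Submission imports Defs begin

lemma cK_mult_single: "cK z * Poly_Mapping.single m w = Poly_Mapping.single m (z*w)"
  unfolding cK_def by (simp add: mult_single)
lemma cK_add: "cK (a+b) = cK a + cK b" by (simp add: cK_def single_add)
lemma cK_mult: "cK (a*b) = cK a * cK b" by (simp add: cK_def mult_single)
lemma cK_0[simp]: "cK 0 = 0" by (simp add: cK_def)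
lemma cK_1[simp]: "cK 1 = 1" by (simp add: cK_def)
lemma lookup_cK_mult: "Poly_Mapping.lookup (cK z * f) m = z * Poly_Mapping.lookup f m"
proof -
  have "cK z * f = Poly_Mapping.map ((*) z) f" by (simp add: cK_def mult_map_scale_conv_mult)
  then show ?thesis by (simp add: Poly_Mapping.map.rep_eq when_def)
qed
lemma X_mult: "X m * X m' = X (m + m')" by (simp add: X_def mult_single)
lemma cK_X: "cK z * X m = Poly_Mapping.single m z" by (simp add: X_def cK_mult_single)

lemma pm_decomp: "f = (\<Sum>m\<in>Poly_Mapping.keys f. Poly_Mapping.single m (Poly_Mapping.lookup f m))"
  by (rule poly_mapping_eqI) (auto simp: lookup_sum lookup_single when_def in_keys_iff)

lemma pm_decomp_sub:
  assumes "finite S" "Poly_Mapping.keys f \<subseteq> S"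
  shows "f = (\<Sum>m\<in>S. Poly_Mapping.single m (Poly_Mapping.lookup f m))"
proof -
  have "(\<Sum>m\<in>S. Poly_Mapping.single m (Poly_Mapping.lookup f m)) = (\<Sum>m\<in>Poly_Mapping.keys f. Poly_Mapping.single m (Poly_Mapping.lookup f m))"
    by (rule sum.mono_neutral_right) (use assms in \<open>auto simp: in_keys_iff\<close>)
  then show ?thesis using pm_decomp[of f] by simp
qed

lemma bracket_sub:
  assumes "finite S" "Poly_Mapping.keys f \<subseteq> S" "finite T" "Poly_Mapping.keys g \<subseteq> T"
  shows "bracket \<beta> c n f g = (\<Sum>m1\<in>S. \<Sum>m2\<in>T. cK (Poly_Mapping.lookup f m1 * Poly_Mapping.lookup g m2) * bracket_mon \<beta> c n m1 m2)"
proof -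
  have "bracket \<beta> c n f g = (\<Sum>m1\<in>S. \<Sum>m2\<in>Poly_Mapping.keys g. cK (Poly_Mapping.lookup f m1 * Poly_Mapping.lookup g m2) * bracket_mon \<beta> c n m1 m2)"
    unfolding bracket_def
    by (rule sum.mono_neutral_left) (use assms in \<open>auto simp: in_keys_iff\<close>)
  also have "\<dots> = (\<Sum>m1\<in>S. \<Sum>m2\<in>T. cK (Poly_Mapping.lookup f m1 * Poly_Mapping.lookup g m2) * bracket_mon \<beta> c n m1 m2)"
    by (rule sum.cong[OF refl], rule sum.mono_neutral_left) (use assms in \<open>auto simp: in_keys_iff\<close>)
  finally show ?thesis .
qed

lemma bracket_single: "bracket \<beta> c n (Poly_Mapping.single m1 a) (Poly_Mapping.single m2 b) = cK (a*b) * bracket_mon \<beta> c n m1 m2"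
  by (subst bracket_sub[of "{m1}" _ "{m2}"]) auto

lemma bracket_X: "bracket \<beta> c n (X m1) (X m2) = bracket_mon \<beta> c n m1 m2"
  using bracket_single[of \<beta> c n m1 1 m2 1] by (simp add: X_def)

lemma bracket0: "bracket \<beta> c 0 f g = f * g"
proof -
  have "f * g = (\<Sum>m1\<in>Poly_Mapping.keys f. Poly_Mapping.single m1 (Poly_Mapping.lookup f m1)) * (\<Sum>m2\<in>Poly_Mapping.keys g. Poly_Mapping.single m2 (Poly_Mapping.lookup g m2))"
    using pm_decomp[of f] pm_decomp[of g] by simp
  also have "\<dots> = bracket \<beta> c 0 f g"
    unfolding bracket_def bracket_mon_def sum_distrib_left sum_distrib_right
    by (simp add: X_def mult_single cK_mult_single mult.assoc) (rule sum.swap)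
  finally show ?thesis by simp
qed


fun dd :: "mon \<Rightarrow> nat" where "dd (a,b,c,d) = d"

lemma dd_add: "dd (m1 + m2) = dd m1 + dd m2"
  by (cases m1; cases m2) auto

definition psi :: "complex \<Rightarrow> K \<Rightarrow> K" where
  "psi t f = Poly_Mapping.mapp (\<lambda>m v. t ^ dd m * v) f"

lemma lookup_psi: "Poly_Mapping.lookup (psi t f) m = t ^ dd m * Poly_Mapping.lookup f m"
  by (simp add: psi_def lookup_mapp when_def in_keys_iff)

lemma keys_psi_sub: "Poly_Mapping.keys (psi t f) \<subseteq> Poly_Mapping.keys f"
  by (simp add: psi_def keys_mapp_subset)

lemma keys_psi: "t \<noteq> 0 \<Longrightarrow> Poly_Mapping.keys (psi t f) = Poly_Mapping.keys f"
  by (auto simp: in_keys_iff lookup_psi)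

lemma psi_add: "psi t (f + g) = psi t f + psi t g"
  by (rule poly_mapping_eqI) (simp add: lookup_psi lookup_add algebra_simps)

lemma psi_cK: "psi t (cK z * f) = cK z * psi t f"
  by (rule poly_mapping_eqI) (simp add: lookup_psi lookup_cK_mult mult.left_commute)

lemma psi_single: "psi t (Poly_Mapping.single m a) = Poly_Mapping.single m (t ^ dd m * a)"
  by (rule poly_mapping_eqI) (simp add: lookup_psi lookup_single when_def)

lemma psi_sum: "psi t (sum F A) = (\<Sum>x\<in>A. psi t (F x))"
  by (rule poly_mapping_eqI) (simp add: lookup_psi lookup_sum sum_distrib_left)

lemma psi_mult: "psi t (f * g) = psi t f * psi t g"
proof -
  have fg: "f * g = (\<Sum>m1\<in>Poly_Mapping.keys f. \<Sum>m2\<in>Poly_Mapping.keys g. Poly_Mapping.single (m1+m2) (Poly_Mapping.lookup f m1 * Poly_Mapping.lookup g m2))"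
    by (subst pm_decomp[of f], subst pm_decomp[of g]) (simp add: sum_distrib_left sum_distrib_right mult_single, rule sum.swap)
  have pf: "psi t f = (\<Sum>m1\<in>Poly_Mapping.keys f. Poly_Mapping.single m1 (Poly_Mapping.lookup (psi t f) m1))"
    by (rule pm_decomp_sub) (auto simp: keys_psi_sub)
  have pg: "psi t g = (\<Sum>m1\<in>Poly_Mapping.keys g. Poly_Mapping.single m1 (Poly_Mapping.lookup (psi t g) m1))"
    by (rule pm_decomp_sub) (auto simp: keys_psi_sub)
  show ?thesis
    apply (subst fg, subst pf, subst pg)
    apply (simp add: psi_sum psi_single sum_distrib_left sum_distrib_right mult_single lookup_psi dd_add power_add)
    apply (subst sum.swap[of _ "Poly_Mapping.keys g"])
    apply (rule sum.cong[OF refl], rule sum.cong[OF refl])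
    apply (simp add: ac_simps)
    done
qed

lemma psi_inv: "t \<noteq> 0 \<Longrightarrow> psi (1/t) (psi t f) = f"
  by (rule poly_mapping_eqI) (simp add: lookup_psi power_divide field_simps)

lemma psi_bij: "t \<noteq> 0 \<Longrightarrow> bij (psi t)"
proof -
  assume t: "t \<noteq> 0"
  have 1: "psi (1/t) \<circ> psi t = id" using t by (simp add: fun_eq_iff psi_inv)
  have "psi (1/(1/t)) (psi (1/t) f) = f" for f
    by (rule psi_inv) (use t in simp)
  then have 2: "psi t \<circ> psi (1/t) = id" by (simp add: fun_eq_iff)
  show ?thesis by (rule o_bij[OF 1 2])
qed

lemma psi_X: "psi t (X m) = cK (t ^ dd m) * X m"
  by (simp add: X_def psi_single cK_mult_single)

lemma linext_cK: "linext D (cK z * f) = cK z * linext D f"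
proof (cases "z = 0")
  case True then show ?thesis by (simp add: linext_def)
next
  case False
  have k: "Poly_Mapping.keys (cK z * f) = Poly_Mapping.keys f"
    using False by (auto simp: in_keys_iff lookup_cK_mult)
  show ?thesis unfolding linext_def k
    by (simp add: lookup_cK_mult sum_distrib_left cK_mult mult.assoc)
qed

lemma delta_pow_cK: "(delta \<beta> ^^ i) (cK z * f) = cK z * (delta \<beta> ^^ i) f"
  by (induction i) (auto simp: delta_def linext_cK)

lemma pi_mon_single: "pi_mon m = Poly_Mapping.single ((0,0,-1,1)+m) (of_int (wt m))"
  unfolding pi_mon_def F2_def X_def cK_def by (simp only: mult_single) simp

lemma S_mon_single: "S_mon (a,b,c,d) = Poly_Mapping.single (a-1,b+1,c,d) (of_nat a*(-1/3)) + Poly_Mapping.single (a+2,b-1,c,d) (of_nat b*(-1/2))"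
  by (simp add: X_def cK_def mult_single)

lemma psi_D: "psi t (S_mon m + cK \<beta> * pi_mon m) = cK (t ^ dd m) * (S_mon m + cK (t*\<beta>) * pi_mon m)"
proof (cases m)
  case (fields a b c d)
  show ?thesis
    unfolding fields S_mon_single pi_mon_single
    by (simp only: psi_add psi_single cK_mult_single distrib_left dd.simps add_Pair) (simp add: ac_simps)
qed

lemma psi_delta: assumes "t \<noteq> 0" shows "psi t (delta \<beta> f) = delta (t*\<beta>) (psi t f)"
proof -
  have "psi t (delta \<beta> f) = (\<Sum>m\<in>Poly_Mapping.keys f. cK (Poly_Mapping.lookup f m) * psi t (S_mon m + cK \<beta> * pi_mon m))"
    by (simp add: delta_def linext_def psi_sum psi_cK)
  also have "\<dots> = delta (t*\<beta>) (psi t f)"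
    by (simp add: delta_def linext_def psi_D keys_psi[OF assms] lookup_psi cK_mult ac_simps)
  finally show ?thesis .
qed

lemma psi_cK0: "psi t (cK z) = cK z"
  by (simp add: cK_def psi_single zero_prod_def)

lemma psi_delta_pow: assumes "t \<noteq> 0" shows "psi t ((delta \<beta> ^^ i) f) = (delta (t*\<beta>) ^^ i) (psi t f)"
  by (induction i) (auto simp: psi_delta[OF assms])

lemma psi_bracket_mon: assumes "t \<noteq> 0"
  shows "psi t (bracket_mon \<beta> c n m1 m2) = cK (t ^ dd m1 * t ^ dd m2) * bracket_mon (t*\<beta>) c n m1 m2"
  unfolding bracket_mon_def
  apply (simp only: psi_sum psi_mult psi_cK psi_cK0 psi_delta_pow[OF assms] psi_X delta_pow_cK sum_distrib_left)
  apply (rule sum.cong[OF refl])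
  apply (simp add: cK_mult ac_simps)
  done

lemma psi_bracket: assumes "t \<noteq> 0"
  shows "psi t (bracket \<beta> c n f g) = bracket (t*\<beta>) c n (psi t f) (psi t g)"
proof -
  have "bracket (t*\<beta>) c n (psi t f) (psi t g) = (\<Sum>m1\<in>Poly_Mapping.keys f. \<Sum>m2\<in>Poly_Mapping.keys g. cK (Poly_Mapping.lookup (psi t f) m1 * Poly_Mapping.lookup (psi t g) m2) * bracket_mon (t*\<beta>) c n m1 m2)"
    by (rule bracket_sub) (auto simp: keys_psi_sub)
  then show ?thesis
    by (simp add: bracket_def psi_sum psi_cK0 psi_mult psi_bracket_mon[OF assms] lookup_psi cK_mult ac_simps)
qed

lemma Kcomp_psi: "f \<in> Kcomp k p \<Longrightarrow> psi t f \<in> Kcomp k p"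
  using keys_psi_sub[of t f] by (auto simp: Kcomp_def)

lemma iso_psi:
  assumes "t \<noteq> 0" "\<beta>' = t * \<beta>"
  shows "modular_isomorphic (bracket \<beta> c) (bracket \<beta>' c)"
  unfolding modular_isomorphic_def
  apply (rule exI[of _ "psi t"])
  using assms by (simp add: psi_bij psi_add psi_cK Kcomp_psi psi_bracket)



lemma keys_X[simp]: "Poly_Mapping.keys (X m) = {m}" by (simp add: X_def)
lemma lookup_X: "Poly_Mapping.lookup (X m) k = (if m = k then 1 else 0)" by (simp add: X_def lookup_single when_def)

lemma delta_X: "delta \<beta> (X m) = S_mon m + cK \<beta> * pi_mon m"
  by (simp add: delta_def linext_def lookup_X)

lemma delta_single: "delta \<beta> (Poly_Mapping.single m a) = cK a * (S_mon m + cK \<beta> * pi_mon m)"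
  by (cases "a = 0") (simp_all add: delta_def linext_def)

lemmas calc_simps = cK_mult_single distrib_left distrib_right mult_single X_def

lemma E1: "bracket \<beta> c 1 (X (1,0,0,0)) (X (0,1,0,0)) =
  Poly_Mapping.single (3,0,0,0) (-2) + Poly_Mapping.single (0,2,0,0) 2"
  unfolding bracket_X
  apply (simp add: bracket_mon_def delta_X delta_single S_mon_single pi_mon_single One_nat_def)
  apply (simp add: calc_simps delta_single S_mon_single pi_mon_single)
  apply (rule poly_mapping_eqI)
  apply (auto simp add: lookup_add lookup_single when_def eval_nat_numeral)
  apply (simp_all add: algebra_simps)?
  done


lemma E2: "bracket \<beta> c 1 (X (0,0,1,0)) (X (1,0,0,0)) = Poly_Mapping.single (0,1,1,0) (-(c-2)/3) + Poly_Mapping.single (1,0,0,1) (4*\<beta>*c)"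
  unfolding bracket_X
  apply (simp add: bracket_mon_def delta_X delta_single S_mon_single pi_mon_single One_nat_def numeral_2_eq_2 gbinomial_1)
  apply (simp add: calc_simps delta_single S_mon_single pi_mon_single)
  apply (rule poly_mapping_eqI)
  apply (auto simp add: lookup_add lookup_single when_def eval_nat_numeral algebra_simps)
  apply (simp_all add: field_simps)?
  done

lemma E3: "bracket \<beta> c 2 (X (0,0,1,0)) (X (0,0,1,0)) = Poly_Mapping.single (0,0,0,2) (-4*(c-1)^2*\<beta>^2)"
  unfolding bracket_X
  apply (simp add: bracket_mon_def delta_X delta_single S_mon_single pi_mon_single One_nat_def numeral_2_eq_2 gbinomial_1)
  apply (simp add: calc_simps delta_single S_mon_single pi_mon_single)
  apply (rule poly_mapping_eqI)
  apply (auto simp add: lookup_add lookup_single when_def eval_nat_numeral algebra_simps)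
  apply (simp_all add: field_simps)?
  done

lemma E4: "bracket \<beta> c 1 (X (0,0,1,0)) (X (0,0,0,1)) = Poly_Mapping.single (0,0,0,2) (2*\<beta>*c)"
  unfolding bracket_X
  apply (simp add: bracket_mon_def delta_X delta_single S_mon_single pi_mon_single One_nat_def numeral_2_eq_2 gbinomial_1)
  apply (simp add: calc_simps delta_single S_mon_single pi_mon_single)
  apply (rule poly_mapping_eqI)
  apply (auto simp add: lookup_add lookup_single when_def eval_nat_numeral algebra_simps)
  apply (simp_all add: field_simps)?
  done

lemma keys_single2: "Poly_Mapping.keys (Poly_Mapping.single a x + Poly_Mapping.single b y) \<subseteq> {a,b}"
  by (rule order_trans[OF keys_add]) auto
lemma keys_single3: "Poly_Mapping.keys (Poly_Mapping.single a x + Poly_Mapping.single b y + Poly_Mapping.single d z) \<subseteq> {a,b,d}"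
  by (rule order_trans[OF keys_add]) (use keys_single2[of a x b y] in auto)

lemma R1: "Poly_Mapping.lookup (bracket \<beta> c 1 (Poly_Mapping.single (1,0,0,0) \<alpha> + Poly_Mapping.single (0,0,-2,2) \<gamma>)
   (Poly_Mapping.single (0,1,0,0) x + Poly_Mapping.single (1,0,-1,1) y + Poly_Mapping.single (0,0,-3,3) z)) (3,0,0,0) = -2*\<alpha>*x
  \<and> Poly_Mapping.lookup (bracket \<beta> c 1 (Poly_Mapping.single (1,0,0,0) \<alpha> + Poly_Mapping.single (0,0,-2,2) \<gamma>)
   (Poly_Mapping.single (0,1,0,0) x + Poly_Mapping.single (1,0,-1,1) y + Poly_Mapping.single (0,0,-3,3) z)) (0,2,0,0) = 2*\<alpha>*x"
  apply (subst bracket_sub[of "{(1,0,0,0),(0,0,-2,2)}" _ "{(0,1,0,0),(1,0,-1,1),(0,0,-3,3)}"],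
     simp, rule keys_single2, simp, rule keys_single3)+
  apply (simp add: lookup_add lookup_single when_def)
  apply (simp add: bracket_mon_def delta_X delta_single S_mon_single pi_mon_single One_nat_def gbinomial_1)
  apply (simp add: calc_simps delta_single S_mon_single pi_mon_single lookup_add lookup_cK_mult lookup_single when_def eval_nat_numeral)
  apply (simp_all add: algebra_simps)?
  done

lemma R3: "Poly_Mapping.lookup (bracket \<beta> c 1 (Poly_Mapping.single (0,0,1,0) l) (Poly_Mapping.single (1,0,0,0) \<alpha> + Poly_Mapping.single (0,0,-2,2) \<gamma>)) (0,1,1,0)
   = -(c-2)/3*l*\<alpha>"
  apply (subst bracket_sub[of "{(0,0,1,0)}" _ "{(1,0,0,0),(0,0,-2,2)}"], simp, simp, simp, rule keys_single2)
  apply (simp add: lookup_add lookup_single when_def)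
  apply (simp add: bracket_mon_def delta_X delta_single S_mon_single pi_mon_single One_nat_def gbinomial_1)
  apply (simp add: calc_simps delta_single S_mon_single pi_mon_single lookup_add lookup_cK_mult lookup_single when_def eval_nat_numeral)
  apply (simp_all add: algebra_simps)?
  done

lemma X_Kcomp: "X m \<in> Kcomp (wt m) (idx m)"
  by (simp add: Kcomp_def)

lemma comp_keys: "f \<in> Kcomp k p \<Longrightarrow> Poly_Mapping.keys f \<subseteq> {m. wt m = k \<and> idx m = p}"
  by (auto simp: Kcomp_def)

lemma set_A: "{m. wt m = -2 \<and> idx m = 1} \<subseteq> {(0,0,1,0)}"
  by (auto; presburger)
lemma set_B: "{m. wt m = 0 \<and> idx m = 1} \<subseteq> {(0,0,0,1)}"
  by (auto; presburger)
lemma set_F: "{m. wt m = 2 \<and> idx m = 0} \<subseteq> {(0,0,-1,1)}"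
  by (auto; presburger)
lemma set_4: "{m. wt m = 4 \<and> idx m = 0} \<subseteq> {(1,0,0,0),(0,0,-2,2)}"
  by (auto; presburger)
lemma set_6: "{m. wt m = 6 \<and> idx m = 0} \<subseteq> {(0,1,0,0),(1,0,-1,1),(0,0,-3,3)}"
  by (auto; presburger)

lemma comp_decomp:
  assumes "f \<in> Kcomp k p" "{m. wt m = k \<and> idx m = p} \<subseteq> S" "finite S"
  shows "f = (\<Sum>m\<in>S. Poly_Mapping.single m (Poly_Mapping.lookup f m))"
  by (rule pm_decomp_sub) (use assms comp_keys in blast)+

lemma fwd:
  fixes \<phi> :: "K \<Rightarrow> K"
  assumes bij: "bij \<phi>" and add: "\<And>f g. \<phi> (f+g) = \<phi> f + \<phi> g"
    and lin: "\<And>z f. \<phi> (cK z * f) = cK z * \<phi> f"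
    and gr: "\<And>k p f. f \<in> Kcomp k p \<Longrightarrow> \<phi> f \<in> Kcomp k p"
    and br: "\<And>n f g. \<phi> (bracket \<beta> c n f g) = bracket \<beta>' c' n (\<phi> f) (\<phi> g)"
  shows "c = c' \<and> (\<beta> = 0 \<longleftrightarrow> \<beta>' = 0)"
proof -
  have inj: "inj \<phi>" using bij bij_is_inj by blast
  have z: "\<phi> 0 = 0" using add[of 0 0] by simp
  have mul: "\<phi> (f * g) = \<phi> f * \<phi> g" for f g using br[of 0 f g] by (simp add: bracket0)
  have sc: "\<phi> (Poly_Mapping.single m a) = cK a * \<phi> (X m)" for m a
    using lin[of a "X m"] by (simp add: cK_X)
  have nz: "\<phi> (X m) \<noteq> 0" for m
  proof
    assume "\<phi> (X m) = 0"
    then have "X m = 0" using inj z by (metis injD)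
    then show False using lookup_X[of m m] by simp
  qed
  define l where "l = Poly_Mapping.lookup (\<phi> (X (0,0,1,0))) (0,0,1,0)"
  have hA: "\<phi> (X (0,0,1,0)) = Poly_Mapping.single (0,0,1,0) l"
    using comp_decomp[OF gr[OF X_Kcomp[of "(0,0,1,0)"]], of "{(0,0,1,0)}"] set_A by (simp add: l_def)
  define nu where "nu = Poly_Mapping.lookup (\<phi> (X (0,0,0,1))) (0,0,0,1)"
  have hB: "\<phi> (X (0,0,0,1)) = Poly_Mapping.single (0,0,0,1) nu"
    using comp_decomp[OF gr[OF X_Kcomp[of "(0,0,0,1)"]], of "{(0,0,0,1)}"] set_B by (simp add: nu_def)
  define mu where "mu = Poly_Mapping.lookup (\<phi> (X (0,0,-1,1))) (0,0,-1,1)"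
  have hF: "\<phi> (X (0,0,-1,1)) = Poly_Mapping.single (0,0,-1,1) mu"
    using comp_decomp[OF gr[OF X_Kcomp[of "(0,0,-1,1)"]], of "{(0,0,-1,1)}"] set_F by (simp add: mu_def)
  define \<alpha> where "\<alpha> = Poly_Mapping.lookup (\<phi> (X (1,0,0,0))) (1,0,0,0)"
  define \<gamma> where "\<gamma> = Poly_Mapping.lookup (\<phi> (X (1,0,0,0))) (0,0,-2,2)"
  have h4: "\<phi> (X (1,0,0,0)) = Poly_Mapping.single (1,0,0,0) \<alpha> + Poly_Mapping.single (0,0,-2,2) \<gamma>"
    using comp_decomp[OF gr[OF X_Kcomp[of "(1,0,0,0)"]], of "{(1,0,0,0),(0,0,-2,2)}"] set_4 by (simp add: \<alpha>_def \<gamma>_def)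
  define x where "x = Poly_Mapping.lookup (\<phi> (X (0,1,0,0))) (0,1,0,0)"
  define y where "y = Poly_Mapping.lookup (\<phi> (X (0,1,0,0))) (1,0,-1,1)"
  define zz where "zz = Poly_Mapping.lookup (\<phi> (X (0,1,0,0))) (0,0,-3,3)"
  have h6: "\<phi> (X (0,1,0,0)) = Poly_Mapping.single (0,1,0,0) x + Poly_Mapping.single (1,0,-1,1) y + Poly_Mapping.single (0,0,-3,3) zz"
    using comp_decomp[OF gr[OF X_Kcomp[of "(0,1,0,0)"]], of "{(0,1,0,0),(1,0,-1,1),(0,0,-3,3)}"] set_6
    by (simp add: x_def y_def zz_def add.assoc)
  have l0: "l \<noteq> 0" using nz[of "(0,0,1,0)"] hA by auto
  have nu0: "nu \<noteq> 0" using nz[of "(0,0,0,1)"] hB by auto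
  have mu0: "mu \<noteq> 0" using nz[of "(0,0,-1,1)"] hF by auto
  have a0: "\<alpha> \<noteq> 0"
  proof
    assume a: "\<alpha> = 0"
    have "\<phi> (cK (\<gamma>/mu^2) * (X (0,0,-1,1) * X (0,0,-1,1))) = \<phi> (X (1,0,0,0))"
      unfolding lin unfolding mul hF h4 a using mu0 by (simp add: cK_mult_single mult_single power2_eq_square eval_nat_numeral)
    then have "cK (\<gamma>/mu^2) * (X (0,0,-1,1) * X (0,0,-1,1)) = X (1,0,0,0)" using inj by (metis injD)
    then have "Poly_Mapping.lookup (cK (\<gamma>/mu^2) * (X (0,0,-1,1) * X (0,0,-1,1))) (1,0,0,0) = 1"
      by (simp add: lookup_X)
    then show False by (simp add: X_mult cK_X lookup_single when_def)
  qed
  have e1: "\<phi> (bracket \<beta> c 1 (X (1,0,0,0)) (X (0,1,0,0))) =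
     cK (-2) * (\<phi> (X (1,0,0,0)) * \<phi> (X (1,0,0,0)) * \<phi> (X (1,0,0,0))) + cK 2 * (\<phi> (X (0,1,0,0)) * \<phi> (X (0,1,0,0)))"
  proof -
    have "bracket \<beta> c 1 (X (1,0,0,0)) (X (0,1,0,0)) = cK (-2) * (X (1,0,0,0) * X (1,0,0,0) * X (1,0,0,0)) + cK 2 * (X (0,1,0,0) * X (0,1,0,0))"
      unfolding E1 by (simp add: X_mult cK_X eval_nat_numeral)
    then show ?thesis by (simp only: add lin) (simp only: mul)
  qed
  have q1: "-2*\<alpha>^3 = -2*\<alpha>*x \<and> 2*x^2 = 2*\<alpha>*x"
    using arg_cong[OF e1, of "\<lambda>f. Poly_Mapping.lookup f (3,0,0,0)"] arg_cong[OF e1, of "\<lambda>f. Poly_Mapping.lookup f (0,2,0,0)"]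
    unfolding br h4 h6 using R1[of \<beta>' c' \<alpha> \<gamma> x y zz]
    by (simp add: distrib_left distrib_right mult_single cK_mult_single lookup_add lookup_single when_def power2_eq_square power3_eq_cube)
  have xa: "x = 1 \<and> \<alpha> = 1"
  proof -
    have "x = \<alpha>^2" using q1 a0 by (simp add: power3_eq_cube power2_eq_square)
    moreover then have "\<alpha>^4 = \<alpha>^3" using q1 by (simp add: power2_eq_square power3_eq_cube eval_nat_numeral algebra_simps)
    ultimately show ?thesis using a0 by (simp add: eval_nat_numeral)
  qed
  have e2: "\<phi> (bracket \<beta> c 1 (X (0,0,1,0)) (X (1,0,0,0))) =
     cK (-(c-2)/3) * (\<phi> (X (0,0,1,0)) * \<phi> (X (0,1,0,0))) + cK (4*\<beta>*c) * (\<phi> (X (0,0,0,1)) * \<phi> (X (1,0,0,0)))"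
  proof -
    have "bracket \<beta> c 1 (X (0,0,1,0)) (X (1,0,0,0)) = cK (-(c-2)/3) * (X (0,0,1,0) * X (0,1,0,0)) + cK (4*\<beta>*c) * (X (0,0,0,1) * X (1,0,0,0))"
      unfolding E2 by (simp add: X_mult cK_X eval_nat_numeral)
    then show ?thesis by (simp only: add lin) (simp only: mul)
  qed
  have q2: "-(c-2)/3*l*x = -(c'-2)/3*l*\<alpha>"
    using arg_cong[OF e2, of "\<lambda>f. Poly_Mapping.lookup f (0,1,1,0)"]
    unfolding br hA hB h4 h6 using R3[of \<beta>' c' l \<alpha> \<gamma>]
    by (simp add: distrib_left distrib_right mult_single cK_mult_single lookup_add lookup_single when_def)
  have cc: "c = c'" using q2 xa l0 by (simp add: field_simps)
  have e3: "\<phi> (bracket \<beta> c 2 (X (0,0,1,0)) (X (0,0,1,0))) = cK (-4*(c-1)^2*\<beta>^2) * (\<phi> (X (0,0,0,1)) * \<phi> (X (0,0,0,1)))"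
  proof -
    have "bracket \<beta> c 2 (X (0,0,1,0)) (X (0,0,1,0)) = cK (-4*(c-1)^2*\<beta>^2) * (X (0,0,0,1) * X (0,0,0,1))"
      unfolding E3 by (simp add: X_mult cK_X eval_nat_numeral)
    then show ?thesis by (simp only: add lin) (simp only: mul)
  qed
  have q3: "-4*(c-1)^2*\<beta>^2 * nu^2 = l^2 * (-4*(c'-1)^2*\<beta>'^2)"
    using arg_cong[OF e3, of "\<lambda>f. Poly_Mapping.lookup f (0,0,0,2)"]
    unfolding br hA hB bracket_single E3[unfolded bracket_X]
    by (simp add: mult_single cK_mult_single lookup_single when_def power2_eq_square eval_nat_numeral)
  have e4: "\<phi> (bracket \<beta> c 1 (X (0,0,1,0)) (X (0,0,0,1))) = cK (2*\<beta>*c) * (\<phi> (X (0,0,0,1)) * \<phi> (X (0,0,0,1)))"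
  proof -
    have "bracket \<beta> c 1 (X (0,0,1,0)) (X (0,0,0,1)) = cK (2*\<beta>*c) * (X (0,0,0,1) * X (0,0,0,1))"
      unfolding E4 by (simp add: X_mult cK_X eval_nat_numeral)
    then show ?thesis by (simp only: add lin) (simp only: mul)
  qed
  have q4: "2*\<beta>*c * nu^2 = l * nu * (2*\<beta>'*c')"
    using arg_cong[OF e4, of "\<lambda>f. Poly_Mapping.lookup f (0,0,0,2)"]
    unfolding br hA hB bracket_single E4[unfolded bracket_X]
    by (simp add: mult_single cK_mult_single lookup_single when_def power2_eq_square eval_nat_numeral) (metis)
  have "\<beta> = 0 \<longleftrightarrow> \<beta>' = 0"
  proof (cases "c = 1")
    case True
    then show ?thesis using q4 cc l0 nu0 by auto
  next
    case False
    then show ?thesis using q3 cc l0 nu0 by auto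
  qed
  then show ?thesis using cc by simp
qed

theorem mainTheorem11:
  fixes \<beta> c \<beta>' c' :: complex
  shows "modular_isomorphic (bracket \<beta> c) (bracket \<beta>' c') \<longleftrightarrow>
           c = c' \<and> ((\<beta> = 0 \<and> \<beta>' = 0) \<or> (\<beta> \<noteq> 0 \<and> \<beta>' \<noteq> 0))"
proof
  assume "modular_isomorphic (bracket \<beta> c) (bracket \<beta>' c')"
  then obtain \<phi> where p: "bij \<phi>" "\<forall>f g. \<phi> (f + g) = \<phi> f + \<phi> g" "\<forall>z f. \<phi> (cK z * f) = cK z * \<phi> f"
     "\<forall>k p. \<forall>f\<in>Kcomp k p. \<phi> f \<in> Kcomp k p" "\<forall>n f g. \<phi> (bracket \<beta> c n f g) = bracket \<beta>' c' n (\<phi> f) (\<phi> g)"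
    unfolding modular_isomorphic_def by blast
  have "c = c' \<and> (\<beta> = 0 \<longleftrightarrow> \<beta>' = 0)"
    by (rule fwd[of \<phi>]) (use p in auto)
  then show "c = c' \<and> ((\<beta> = 0 \<and> \<beta>' = 0) \<or> (\<beta> \<noteq> 0 \<and> \<beta>' \<noteq> 0))" by blast
next
  assume h: "c = c' \<and> ((\<beta> = 0 \<and> \<beta>' = 0) \<or> (\<beta> \<noteq> 0 \<and> \<beta>' \<noteq> 0))"
  show "modular_isomorphic (bracket \<beta> c) (bracket \<beta>' c')"
  proof (cases "\<beta> = 0")
    case True
    then show ?thesis using h iso_psi[of 1 \<beta>' \<beta> c] by simp
  next
    case False
    then show ?thesis using h iso_psi[of "\<beta>'/\<beta>" \<beta>' \<beta> c] by simp
  qed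
qed
end
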